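(* Let $\mathbb F$ be a field of characteristic $2$, let $m\ge1$, and let $\mathfrak h_m$ be the Heisenberg Lie algebra over $\mathbb F$ with basis $e_1,\dots,e_{2m+1}$ and only nonzero brackets $[e_i,e_{m+i}]=-[e_{m+i},e_i]=e_{2m+1}$ for $1\le i\le m$. For $\lambda=(\lambda_1,\dots,\lambda_{2m+1})\in\mathbb F^{2m+1}$ let $\mathfrak h_m^\lambda(2)$ denote $\mathfrak h_m$ with the restricted structure given by the $[2]$-operator $$\left(\sum_{i=1}^{2m+1}a_ie_i\right)^{[2]}=\left(\sum_{i=1}^{2m+1}a_i^2\lambda_i+\sum_{j=1}^{m}a_ja_{m+j}\right)e_{2m+1}$$ (i.e. the unique $[2]$-operator with $e_i^{[2]}=\lambda_ie_{2m+1}$). Let $\lambda,\lambda'\in\mathbb F^{2m+1}$. Then $\mathfrak h_m^\lambda(2)$ and $\mathfrak h_m^{\lambda'}(2)$ are isomorphic as restricted Lie algebras if and only if there exist an invertible matrix $A\in\mathbb F^{2m\times2m}$, a vector $k=(k_1,\dots,k_{2m})\in\mathbb F^{2m}$ and a scalar $\mu\in\mathbb F$ with $(\det A)^2=\mu^{2m}$ such that (1) $A\begin{pmatrix}0&I_m\\-I_m&0\end{pmatrix}A^{t}=\mu\begin{pmatrix}0&I_m\\-I_m&0\end{pmatrix}$; (2') for every row vector $a=(a_1,\dots,a_{2m})\in\mathbb F^{2m}$, $$\mu\, a\Big(\sum_{i=1}^{2m}\lambda_iE_{ii}\Big)a^{T}+\mu\, a_{\mathrm I}a_{\mathrm{II}}^{T}=aA\Big(\sum_{i=1}^{2m}\lambda'_iE_{ii}\Big)(aA)^{T}+(aA)_{\mathrm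 I}(aA)_{\mathrm{II}}^{T}+\lambda'_{2m+1}(ak^{T})^2;$$ (3) $\lambda_{2m+1}=\mu\,\lambda'_{2m+1}$.
   Context: For $a=(a_1,\dots,a_{2m})\in\mathbb F^{2m}$, $a_{\mathrm I}=(a_1,\dots,a_m)$ and $a_{\mathrm{II}}=(a_{m+1},\dots,a_{2m})$. $E_{ii}$ is the $2m\times2m$ matrix with a single nonzero entry $1$ in position $(i,i)$. $I_m$ is the $m\times m$ identity matrix, and $^t$, $^T$ denote transpose. A restricted Lie algebra isomorphism is a Lie algebra isomorphism $\Psi$ with $\Psi(g^{[2]})=\Psi(g)^{[2]'}$ for all $g$. *)

theory Defs
  imports "Jordan_Normal_Form.Determinant"
begin

text \<open>The Heisenberg Lie algebra h_m is modelled on carrier_vec (2*m+1); coordinate i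
  (0-based) corresponds to the basis vector e_(i+1) of the paper, so e_(2m+1) is
  unit_vec (2*m+1) (2*m).\<close>

definition heis_bracket :: "nat \<Rightarrow> 'a::field vec \<Rightarrow> 'a vec \<Rightarrow> 'a vec" where
  "heis_bracket m x y =
     (\<Sum>i<m. x $ i * y $ (m + i) - x $ (m + i) * y $ i) \<cdot>\<^sub>v unit_vec (2*m+1) (2*m)"

definition heis_sq :: "nat \<Rightarrow> 'a::field vec \<Rightarrow> 'a vec \<Rightarrow> 'a vec" where
  "heis_sq m lam x =
     ((\<Sum>i<2*m+1. x $ i ^ 2 * lam $ i) + (\<Sum>j<m. x $ j * x $ (m + j)))
       \<cdot>\<^sub>v unit_vec (2*m+1) (2*m)"

definition restricted_iso :: "nat \<Rightarrow> 'a::field vec \<Rightarrow> 'a vec \<Rightarrow> ('a vec \<Rightarrow> 'a vec) \<Rightarrow> bool" where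
  "restricted_iso m lam lam' \<Psi> \<longleftrightarrow>
     bij_betw \<Psi> (carrier_vec (2*m+1)) (carrier_vec (2*m+1)) \<and>
     (\<forall>x\<in>carrier_vec (2*m+1). \<forall>y\<in>carrier_vec (2*m+1). \<Psi> (x + y) = \<Psi> x + \<Psi> y) \<and>
     (\<forall>c. \<forall>x\<in>carrier_vec (2*m+1). \<Psi> (c \<cdot>\<^sub>v x) = c \<cdot>\<^sub>v \<Psi> x) \<and>
     (\<forall>x\<in>carrier_vec (2*m+1). \<forall>y\<in>carrier_vec (2*m+1).
        \<Psi> (heis_bracket m x y) = heis_bracket m (\<Psi> x) (\<Psi> y)) \<and>
     (\<forall>x\<in>carrier_vec (2*m+1). \<Psi> (heis_sq m lam x) = heis_sq m lam' (\<Psi> x))"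

definition restricted_isomorphic :: "nat \<Rightarrow> 'a::field vec \<Rightarrow> 'a vec \<Rightarrow> bool" where
  "restricted_isomorphic m lam lam' \<longleftrightarrow> (\<exists>\<Psi>. restricted_iso m lam lam' \<Psi>)"

definition symp_J :: "nat \<Rightarrow> 'a::field mat" where
  "symp_J m = four_block_mat (0\<^sub>m m m) (1\<^sub>m m) (- 1\<^sub>m m) (0\<^sub>m m m)"

definition diag_lam :: "nat \<Rightarrow> 'a::field vec \<Rightarrow> 'a mat" where
  "diag_lam m lam = mat (2*m) (2*m) (\<lambda>(i,j). if i = j then lam $ i else 0)"

end

theory Submission
  imports Defs
begin


lemma sum_split2: "(\<Sum>p<2*m. f p) = (\<Sum>l<m. f l) + (\<Sum>l<m. f (l+m))" for f :: "nat \<Rightarrow> 'a::comm_monoid_add"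
proof -
  have "(\<Sum>p<2*m. f p) = sum f {0..<m+m}" by (simp add: atLeast0LessThan mult_2)
  also have "\<dots> = sum f {0..<m} + sum f {m..<m+m}" by (simp add: sum.atLeastLessThan_concat)
  also have "sum f {m..<m+m} = sum (\<lambda>i. f (i+m)) {0..<m}" using sum.shift_bounds_nat_ivl[of f 0 m m] by simp
  finally show ?thesis by (simp add: atLeast0LessThan)
qed

lemma lin_repr:
  fixes f :: "'a::field vec \<Rightarrow> 'a vec"
  assumes add: "\<forall>x\<in>carrier_vec n. \<forall>y\<in>carrier_vec n. f (x + y) = f x + f y"
    and sm: "\<forall>c. \<forall>x\<in>carrier_vec n. f (c \<cdot>\<^sub>v x) = c \<cdot>\<^sub>v f x"
    and car: "\<forall>x\<in>carrier_vec n. f x \<in> carrier_vec n'"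
    and x: "x \<in> carrier_vec n"
  shows "f x = vec n' (\<lambda>j. \<Sum>i<n. x $ i * f (unit_vec n i) $ j)"
proof -
  have "t \<le> n \<Longrightarrow> f (vec n (\<lambda>i. if i < t then x $ i else (0::'a))) = vec n' (\<lambda>j. \<Sum>i<t. x $ i * f (unit_vec n i) $ j)" for t
  proof (induction t)
    case 0
    have e: "vec n (\<lambda>i. if i < 0 then x $ i else (0::'a)) = 0 \<cdot>\<^sub>v 0\<^sub>v n" by (intro eq_vecI) auto
    have "f (0 \<cdot>\<^sub>v 0\<^sub>v n) = 0 \<cdot>\<^sub>v f (0\<^sub>v n)" using sm by auto
    moreover have "f (0\<^sub>v n) \<in> carrier_vec n'" using car by auto
    ultimately show ?case unfolding e by (intro eq_vecI) auto
  next
    case (Suc t)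
    have e: "vec n (\<lambda>i. if i < Suc t then x $ i else 0) = vec n (\<lambda>i. if i < t then x $ i else 0) + x $ t \<cdot>\<^sub>v unit_vec n t"
      using Suc.prems by (intro eq_vecI) (auto simp: less_Suc_eq)
    have c1: "f (unit_vec n t) \<in> carrier_vec n'" using car by auto
    have "f (vec n (\<lambda>i. if i < Suc t then x $ i else 0)) = f (vec n (\<lambda>i. if i < t then x $ i else 0)) + x $ t \<cdot>\<^sub>v f (unit_vec n t)"
      unfolding e using add sm by auto
    also have "\<dots> = vec n' (\<lambda>j. \<Sum>i<Suc t. x $ i * f (unit_vec n i) $ j)"
      using Suc c1 by (intro eq_vecI) auto
    finally show ?case .
  qed
  from this[of n] have "f (vec n (\<lambda>i. if i < n then x $ i else 0)) = vec n' (\<lambda>j. \<Sum>i<n. x $ i * f (unit_vec n i) $ j)" by simp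
  moreover have "vec n (\<lambda>i. if i < n then x $ i else 0) = x" using x by (intro eq_vecI) auto
  ultimately show ?thesis by simp
qed

definition bil :: "nat \<Rightarrow> 'a::field vec \<Rightarrow> 'a vec \<Rightarrow> 'a" where
  "bil m x y = (\<Sum>i<m. x $ i * y $ (m + i) - x $ (m + i) * y $ i)"

lemma heis_bracket_eq: "heis_bracket m x y = bil m x y \<cdot>\<^sub>v unit_vec (2*m+1) (2*m)"
  unfolding heis_bracket_def bil_def by simp

lemma symp_J_carrier[simp]: "symp_J m \<in> carrier_mat (2*m) (2*m)"
  unfolding symp_J_def by (auto simp: mult_2)

lemma symp_J_dims[simp]: "dim_row (symp_J m) = 2*m" "dim_col (symp_J m) = 2*m"
  unfolding symp_J_def by (simp_all add: mult_2)

lemma symp_J_index: "i < 2*m \<Longrightarrow> j < 2*m \<Longrightarrow>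
  symp_J m $$ (i,j) = (if j = i + m then 1 else if i = j + m then -1 else 0)"
  unfolding symp_J_def by (auto simp: mult_2)

lemma symp_J_vec: assumes v: "v \<in> carrier_vec (2*m)" and p: "p < 2*m"
  shows "(symp_J m *\<^sub>v v) $ p = (if p < m then v $ (p+m) else - v $ (p-m))"
proof -
  have "(symp_J m *\<^sub>v v) $ p = (\<Sum>q<2*m. symp_J m $$ (p,q) * v $ q)"
    using v p by (simp add: mult_mat_vec_def scalar_prod_def atLeast0LessThan)
  also have "\<dots> = (\<Sum>q<2*m. (if q = p + m then 1 else if p = q + m then -1 else 0) * v $ q)"
    using p by (intro sum.cong) (auto simp: symp_J_index)
  also have "\<dots> = (if p < m then v $ (p+m) else - v $ (p-m))"
  proof (cases "p < m")
    case True
    then have "(\<Sum>q<2*m. (if q = p + m then 1 else if p = q + m then -1 else 0) * v $ q) = (\<Sum>q<2*m. (if q = p + m then v $ q else 0))"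
      by (intro sum.cong) auto
    then show ?thesis using True by simp
  next
    case False
    then have "(\<Sum>q<2*m. (if q = p + m then 1 else if p = q + m then -1 else 0) * v $ q) = (\<Sum>q<2*m. (if q = p - m then - v $ q else 0))"
      by (intro sum.cong) auto
    then show ?thesis using False p by simp
  qed
  finally show ?thesis .
qed

lemma symp_J_form: assumes u: "u \<in> carrier_vec (2*m)" and v: "v \<in> carrier_vec (2*m)"
  shows "u \<bullet> (symp_J m *\<^sub>v v) = bil m u v"
proof -
  have "u \<bullet> (symp_J m *\<^sub>v v) = (\<Sum>p<2*m. u $ p * (symp_J m *\<^sub>v v) $ p)"
    using u v unfolding scalar_prod_def by (simp add: atLeast0LessThan del: index_mult_mat_vec)
  also have "\<dots> = (\<Sum>p<2*m. u $ p * (if p < m then v $ (p+m) else - v $ (p-m)))"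
    using v by (intro sum.cong) (auto simp: symp_J_vec simp del: index_mult_mat_vec)
  also have "\<dots> = (\<Sum>l<m. u $ l * v $ (l+m)) + (\<Sum>l<m. u $ (l+m) * (- v $ l))"
    by (simp add: sum_split2)
  also have "\<dots> = bil m u v" unfolding bil_def
    by (simp add: sum_subtractf sum_negf add.commute)
  finally show ?thesis .
qed


definition sqf :: "nat \<Rightarrow> 'a::field vec \<Rightarrow> 'a vec \<Rightarrow> 'a" where
  "sqf m lam x = (\<Sum>i<2*m+1. x $ i ^ 2 * lam $ i) + (\<Sum>j<m. x $ j * x $ (m + j))"

lemma heis_sq_eq: "heis_sq m lam x = sqf m lam x \<cdot>\<^sub>v unit_vec (2*m+1) (2*m)"
  unfolding heis_sq_def sqf_def by simp

lemma diag_form: assumes a: "a \<in> carrier_vec (2*m)"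
  shows "a \<bullet> (diag_lam m lam *\<^sub>v a) = (\<Sum>i<2*m. a $ i ^ 2 * lam $ i)"
proof -
  have "(diag_lam m lam *\<^sub>v a) $ i = lam $ i * a $ i" if i: "i < 2*m" for i
  proof -
    have "(diag_lam m lam *\<^sub>v a) $ i = (\<Sum>q<2*m. (if i = q then lam $ i else 0) * a $ q)"
      using a i by (simp add: diag_lam_def scalar_prod_def atLeast0LessThan)
    also have "\<dots> = (\<Sum>q<2*m. (if q = i then lam $ i * a $ q else 0))"
      by (intro sum.cong) auto
    finally show ?thesis using i by simp
  qed
  then show ?thesis using a
    unfolding scalar_prod_def
    by (auto simp: atLeast0LessThan diag_lam_def power2_eq_square mult.commute mult.left_commute
        simp del: index_mult_mat_vec intro!: sum.cong)
qed

lemma fl_form: assumes a: "a \<in> carrier_vec (2*m)"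
  shows "vec_first a m \<bullet> vec_last a m = (\<Sum>j<m. a $ j * a $ (m + j))"
  using a unfolding scalar_prod_def vec_first_def vec_last_def
  by (auto simp: atLeast0LessThan mult_2 intro!: sum.cong)

lemma sqf_split: assumes x: "x \<in> carrier_vec (2*m+1)"
  shows "sqf m lam x = vec_first x (2*m) \<bullet> (diag_lam m lam *\<^sub>v vec_first x (2*m))
     + vec_first (vec_first x (2*m)) m \<bullet> vec_last (vec_first x (2*m)) m + x $ (2*m) ^ 2 * lam $ (2*m)"
proof -
  have c: "vec_first x (2*m) \<in> carrier_vec (2*m)" by simp
  show ?thesis unfolding sqf_def diag_form[OF c] fl_form[OF c]
    by (simp add: vec_first_def)
qed


lemma bil_first: "bil m u v = bil m (vec_first u (2*m)) (vec_first v (2*m))"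
  unfolding bil_def vec_first_def by (intro sum.cong) auto

lemma converse_dir:
  fixes A :: "'a::field mat" and lam lam' k :: "'a vec"
  assumes two: "(2::'a) = 0" and m: "m \<ge> 1"
    and A: "A \<in> carrier_mat (2*m) (2*m)" and inv: "invertible_mat A"
    and k: "k \<in> carrier_vec (2*m)" and det: "(det A)^2 = \<mu>^(2*m)"
    and AJ: "A * symp_J m * transpose_mat A = \<mu> \<cdot>\<^sub>m symp_J m"
    and Q: "\<forall>a\<in>carrier_vec (2*m).
          let b = transpose_mat A *\<^sub>v a in
          \<mu> * (a \<bullet> (diag_lam m lam *\<^sub>v a)) + \<mu> * (vec_first a m \<bullet> vec_last a m)
          = b \<bullet> (diag_lam m lam' *\<^sub>v b) + vec_first b m \<bullet> vec_last b m
            + lam' $ (2*m) * (a \<bullet> k)^2"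
    and L: "lam $ (2*m) = \<mu> * lam' $ (2*m)"
  shows "restricted_isomorphic m lam lam'"
proof -
  let ?n = "2*m+1"
  let ?z = "unit_vec ?n (2*m) :: 'a vec"
  from inv obtain B where AB0: "A * B = 1\<^sub>m (dim_row A)" and BA0: "B * A = 1\<^sub>m (dim_row B)"
    unfolding invertible_mat_def inverts_mat_def by blast
  have B: "B \<in> carrier_mat (2*m) (2*m)"
  proof -
    have "dim_row B = 2*m" using arg_cong[OF BA0, of dim_col] A by simp
    moreover have "dim_col B = 2*m" using arg_cong[OF AB0, of dim_col] A by simp
    ultimately show ?thesis by auto
  qed
  have AB: "A * B = 1\<^sub>m (2*m)" using AB0 A by simp
  have BA: "B * A = 1\<^sub>m (2*m)" using BA0 B by simp
  have "det B * det A = 1" using arg_cong[OF BA, of det] det_mult[OF B A] by simp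
  then have dA: "det A \<noteq> 0" by auto
  have mu: "\<mu> \<noteq> 0"
  proof
    assume "\<mu> = 0"
    then have "(det A)^2 = 0" using det m by simp
    then show False using dA by simp
  qed
  have TBA: "transpose_mat B * transpose_mat A = 1\<^sub>m (2*m)"
    using transpose_mult[OF A B] AB by simp
  have TAB: "transpose_mat A * transpose_mat B = 1\<^sub>m (2*m)"
    using transpose_mult[OF B A] BA by simp
  have AT: "transpose_mat A \<in> carrier_mat (2*m) (2*m)" and BT: "transpose_mat B \<in> carrier_mat (2*m) (2*m)"
    using A B by auto
  define Psi where "Psi x = vec ?n (\<lambda>j. if j < 2*m then (\<Sum>i<2*m. A $$ (i,j) * x $ i)
       else (\<Sum>i<2*m. x $ i * k $ i) + \<mu> * x $ (2*m))" for x :: "'a vec"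
  have Pcar: "Psi x \<in> carrier_vec ?n" for x unfolding Psi_def by simp
  have ATv: "(transpose_mat A *\<^sub>v a) $ j = (\<Sum>i<2*m. A $$ (i,j) * a $ i)"
    if "a \<in> carrier_vec (2*m)" "j < 2*m" for a j
    using A that by (simp add: scalar_prod_def atLeast0LessThan mult.commute)
  have Pfirst: "vec_first (Psi x) (2*m) = transpose_mat A *\<^sub>v vec_first x (2*m)" for x
    by (rule eq_vecI) (use A in \<open>auto simp: Psi_def vec_first_def scalar_prod_def atLeast0LessThan mult.commute\<close>)
  have Plast: "Psi x $ (2*m) = vec_first x (2*m) \<bullet> k + \<mu> * x $ (2*m)" for x
    using k by (simp add: Psi_def scalar_prod_def vec_first_def atLeast0LessThan)
  have Pz: "Psi x = (\<mu> * x $ (2*m)) \<cdot>\<^sub>v ?z" if "\<forall>i<2*m. x $ i = 0" for x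
    by (rule eq_vecI) (use that in \<open>auto simp: Psi_def\<close>)
  have Psm: "Psi (c \<cdot>\<^sub>v ?z) = (\<mu> * c) \<cdot>\<^sub>v ?z" for c
    by (subst Pz) auto
  have add: "\<forall>x\<in>carrier_vec ?n. \<forall>y\<in>carrier_vec ?n. Psi (x + y) = Psi x + Psi y"
    by (auto simp: Psi_def algebra_simps sum.distrib intro!: eq_vecI)
  have smul: "\<forall>c. \<forall>x\<in>carrier_vec ?n. Psi (c \<cdot>\<^sub>v x) = c \<cdot>\<^sub>v Psi x"
    by (auto simp: Psi_def algebra_simps sum_distrib_left intro!: eq_vecI)
  have inj: "inj_on Psi (carrier_vec ?n)"
  proof (rule inj_onI)
    fix x y assume x: "x \<in> carrier_vec ?n" and y: "y \<in> carrier_vec ?n" and e: "Psi x = Psi y"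
    have vf: "vec_first x (2*m) = vec_first y (2*m)"
    proof -
      have "vec_first x (2*m) = (transpose_mat B * transpose_mat A) *\<^sub>v vec_first x (2*m)"
        using TBA by simp
      also have "\<dots> = transpose_mat B *\<^sub>v vec_first (Psi x) (2*m)"
        using AT BT by (simp add: Pfirst)
      also have "\<dots> = (transpose_mat B * transpose_mat A) *\<^sub>v vec_first y (2*m)"
        using AT BT by (simp add: Pfirst e)
      also have "\<dots> = vec_first y (2*m)" using TBA by simp
      finally show ?thesis .
    qed
    have "vec_first x (2*m) \<bullet> k + \<mu> * x $ (2*m) = vec_first y (2*m) \<bullet> k + \<mu> * y $ (2*m)"
      using Plast[of x] Plast[of y] e by simp
    then have "\<mu> * x $ (2*m) = \<mu> * y $ (2*m)" using vf by simp
    then have l: "x $ (2*m) = y $ (2*m)" using mu by simp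
    show "x = y"
    proof (rule eq_vecI)
      fix i assume "i < dim_vec y"
      then have "i < 2*m \<or> i = 2*m" using y by auto
      then show "x $ i = y $ i"
      proof
        assume i: "i < 2*m"
        show ?thesis using arg_cong[OF vf, of "\<lambda>v. v $ i"] i by (simp add: vec_first_def)
      qed (use l in simp)
    qed (use x y in simp)
  qed
  have surj: "Psi ` carrier_vec ?n = carrier_vec ?n"
  proof
    show "Psi ` carrier_vec ?n \<subseteq> carrier_vec ?n" using Pcar by auto
    show "carrier_vec ?n \<subseteq> Psi ` carrier_vec ?n"
    proof
      fix y :: "'a vec" assume y: "y \<in> carrier_vec ?n"
      define a where "a = transpose_mat B *\<^sub>v vec_first y (2*m)"
      have a: "a \<in> carrier_vec (2*m)" unfolding a_def using BT by simp
      define c where "c = (y $ (2*m) - a \<bullet> k) / \<mu>"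
      define x where "x = vec ?n (\<lambda>i. if i < 2*m then a $ i else c)"
      have vx: "vec_first x (2*m) = a" using a by (intro eq_vecI) (auto simp: x_def vec_first_def)
      have Ta: "transpose_mat A *\<^sub>v a = vec_first y (2*m)"
      proof -
        have "transpose_mat A *\<^sub>v a = (transpose_mat A * transpose_mat B) *\<^sub>v vec_first y (2*m)"
          unfolding a_def using AT BT by simp
        also have "\<dots> = vec_first y (2*m)" using TAB by simp
        finally show ?thesis .
      qed
      have "Psi x = y"
      proof (rule eq_vecI)
        fix j assume "j < dim_vec y"
        then have "j < 2*m \<or> j = 2*m" using y by auto
        then show "Psi x $ j = y $ j"
        proof
          assume j: "j < 2*m"
          have "Psi x $ j = vec_first (Psi x) (2*m) $ j" using j by (simp add: vec_first_def)
          also have "\<dots> = y $ j" unfolding Pfirst vx Ta using j by (simp add: vec_first_def)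
          finally show ?thesis .
        next
          assume j: "j = 2*m"
          show ?thesis unfolding j Plast vx using mu by (simp add: x_def c_def)
        qed
      qed (use y Pcar in auto)
      moreover have "x \<in> carrier_vec ?n" unfolding x_def by simp
      ultimately show "y \<in> Psi ` carrier_vec ?n" by blast
    qed
  qed
  have bilP: "bil m (Psi x) (Psi y) = \<mu> * bil m x y" for x y
  proof -
    let ?a = "vec_first x (2*m)" and ?b = "vec_first y (2*m)"
    have Jc: "symp_J m \<in> carrier_mat (2*m) (2*m)" by simp
    have "bil m (Psi x) (Psi y) = bil m (transpose_mat A *\<^sub>v ?a) (transpose_mat A *\<^sub>v ?b)"
      by (subst bil_first) (simp add: Pfirst)
    also have "\<dots> = (transpose_mat A *\<^sub>v ?a) \<bullet> (symp_J m *\<^sub>v (transpose_mat A *\<^sub>v ?b))"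
      using AT by (simp add: symp_J_form)
    also have "\<dots> = ?a \<bullet> (A *\<^sub>v (symp_J m *\<^sub>v (transpose_mat A *\<^sub>v ?b)))"
      using transpose_vec_mult_scalar[OF A mult_mat_vec_carrier[OF Jc mult_mat_vec_carrier[OF AT vec_first_carrier]] vec_first_carrier] .
    also have "A *\<^sub>v (symp_J m *\<^sub>v (transpose_mat A *\<^sub>v ?b)) = (A * symp_J m * transpose_mat A) *\<^sub>v ?b"
    proof -
      have AJc: "A * symp_J m \<in> carrier_mat (2*m) (2*m)" using A Jc by simp
      have "(A * symp_J m * transpose_mat A) *\<^sub>v ?b = (A * symp_J m) *\<^sub>v (transpose_mat A *\<^sub>v ?b)"
        using assoc_mult_mat_vec[OF AJc AT vec_first_carrier] .
      also have "\<dots> = A *\<^sub>v (symp_J m *\<^sub>v (transpose_mat A *\<^sub>v ?b))"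
        using assoc_mult_mat_vec[OF A Jc mult_mat_vec_carrier[OF AT vec_first_carrier]] .
      finally show ?thesis by simp
    qed
    also have "\<dots> = (\<mu> \<cdot>\<^sub>m symp_J m) *\<^sub>v ?b" by (simp add: AJ)
    also have "\<dots> = \<mu> \<cdot>\<^sub>v (symp_J m *\<^sub>v ?b)"
      by (rule eq_vecI) (auto simp: scalar_prod_def sum_distrib_left mult.assoc)
    also have "?a \<bullet> \<dots> = \<mu> * (?a \<bullet> (symp_J m *\<^sub>v ?b))" by simp
    also have "?a \<bullet> (symp_J m *\<^sub>v ?b) = bil m x y"
      by (simp add: symp_J_form bil_first[of m x y])
    finally show ?thesis .
  qed
  have sq: "\<mu> * sqf m lam x = sqf m lam' (Psi x)" if x: "x \<in> carrier_vec ?n" for x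
  proof -
    let ?a = "vec_first x (2*m)"
    let ?b = "transpose_mat A *\<^sub>v ?a"
    have Qa: "\<mu> * (?a \<bullet> (diag_lam m lam *\<^sub>v ?a)) + \<mu> * (vec_first ?a m \<bullet> vec_last ?a m)
          = ?b \<bullet> (diag_lam m lam' *\<^sub>v ?b) + vec_first ?b m \<bullet> vec_last ?b m
            + lam' $ (2*m) * (?a \<bullet> k)^2"
      using Q[rule_format, of ?a] by (simp add: Let_def)
    have p2: "(?a \<bullet> k + \<mu> * x $ (2*m))^2 = (?a \<bullet> k)^2 + \<mu>^2 * x $ (2*m) ^ 2"
    proof -
      have "(?a \<bullet> k + \<mu> * x $ (2*m))^2 = (?a \<bullet> k)^2 + \<mu>^2 * x $ (2*m) ^ 2 + 2 * ((?a \<bullet> k) * (\<mu> * x $ (2*m)))"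
        by (simp add: power2_sum power_mult_distrib algebra_simps)
      then show ?thesis using two by simp
    qed
    have "sqf m lam' (Psi x) = ?b \<bullet> (diag_lam m lam' *\<^sub>v ?b) + vec_first ?b m \<bullet> vec_last ?b m
        + (?a \<bullet> k + \<mu> * x $ (2*m))^2 * lam' $ (2*m)"
      using sqf_split[OF Pcar[of x], of lam'] by (simp add: Pfirst Plast)
    also have "\<dots> = \<mu> * (?a \<bullet> (diag_lam m lam *\<^sub>v ?a)) + \<mu> * (vec_first ?a m \<bullet> vec_last ?a m)
        + \<mu>^2 * x $ (2*m) ^ 2 * lam' $ (2*m)"
      using Qa p2 by (simp add: algebra_simps)
    also have "\<dots> = \<mu> * sqf m lam x"
      using sqf_split[OF x, of lam] L by (simp add: algebra_simps power2_eq_square)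
    finally show ?thesis by simp
  qed
  have "restricted_iso m lam lam' Psi"
    unfolding restricted_iso_def
  proof (intro conjI)
    show "bij_betw Psi (carrier_vec ?n) (carrier_vec ?n)" using inj surj by (simp add: bij_betw_def)
    show "\<forall>x\<in>carrier_vec ?n. \<forall>y\<in>carrier_vec ?n. Psi (heis_bracket m x y) = heis_bracket m (Psi x) (Psi y)"
      unfolding heis_bracket_eq Psm bilP by simp
    show "\<forall>x\<in>carrier_vec ?n. Psi (heis_sq m lam x) = heis_sq m lam' (Psi x)"
      unfolding heis_sq_eq Psm using sq by simp
  qed (use add smul in auto)
  then show ?thesis unfolding restricted_isomorphic_def by blast
qed


lemma bil_unit: assumes i: "i < 2*m" and j: "j < 2*m"
  shows "bil m (unit_vec (2*m+1) i) (unit_vec (2*m+1) j) = (if j = i + m then 1 else if i = j + m then -1 else 0)"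
proof -
  have "bil m (unit_vec (2*m+1) i) (unit_vec (2*m+1) j) =
     (\<Sum>l<m. (if l = i then (if j = m + l then 1 else 0) else 0)) - (\<Sum>l<m. (if l = j then (if i = m + l then 1 else 0) else 0))"
    unfolding bil_def sum_subtractf[symmetric] using i j by (intro sum.cong) auto
  also have "\<dots> = (if j = i + m then 1 else if i = j + m then -1 else 0)"
    using i j by (auto simp: sum.delta)
  finally show ?thesis .
qed

lemma symp_J_sq: "symp_J m * symp_J m = (-1) \<cdot>\<^sub>m (1\<^sub>m (2*m) :: 'a::field mat)"
proof (rule eq_matI)
  fix i j assume i: "i < dim_row ((-1) \<cdot>\<^sub>m (1\<^sub>m (2*m) :: 'a mat))" and j: "j < dim_col ((-1) \<cdot>\<^sub>m (1\<^sub>m (2*m) :: 'a mat))"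
  then have i: "i < 2*m" and j: "j < 2*m" by auto
  have "(symp_J m * symp_J m) $$ (i,j) = col (symp_J m * symp_J m) j $ i" using i j by simp
  also have "\<dots> = (symp_J m *\<^sub>v col (symp_J m) j) $ i"
    using j by (subst col_mult2[of _ "2*m" "2*m" _ "2*m"]) auto
  also have "\<dots> = (if i < m then col (symp_J m) j $ (i+m) else - col (symp_J m) j $ (i-m))"
    using i by (intro symp_J_vec) (auto simp: carrier_vecI)
  also have "\<dots> = ((-1) \<cdot>\<^sub>m (1\<^sub>m (2*m) :: 'a mat)) $$ (i,j)"
    using i j by (auto simp: symp_J_index)
  finally show "(symp_J m * symp_J m) $$ (i,j) = ((-1) \<cdot>\<^sub>m (1\<^sub>m (2*m) :: 'a mat)) $$ (i,j)" .
qed auto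

lemma det_symp_J: "det (symp_J m :: 'a::field mat) \<noteq> 0"
proof -
  have "det (symp_J m :: 'a mat) * det (symp_J m) = det (symp_J m * symp_J m :: 'a mat)"
    by (rule det_mult[symmetric, OF symp_J_carrier symp_J_carrier])
  also have "\<dots> = 1" unfolding symp_J_sq by simp
  finally show ?thesis by auto
qed

lemma sqf_z: "sqf m lam (c \<cdot>\<^sub>v unit_vec (2*m+1) (2*m)) = c^2 * lam $ (2*m)"
proof -
  have "vec_first (c \<cdot>\<^sub>v unit_vec (2*m+1) (2*m)) (2*m) = 0\<^sub>v (2*m)"
    by (intro eq_vecI) (auto simp: vec_first_def)
  then show ?thesis using sqf_split[of "c \<cdot>\<^sub>v unit_vec (2*m+1) (2*m)" m lam]
    by (simp add: vec_first_def vec_last_def scalar_prod_def)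
qed


lemma forward_dir:
  fixes lam lam' :: "'a::field vec"
  assumes m: "m \<ge> 1" and iso: "restricted_iso m lam lam' Psi"
  shows "\<exists>A k \<mu>. A \<in> carrier_mat (2*m) (2*m) \<and> invertible_mat A \<and>
       k \<in> carrier_vec (2*m) \<and> (det A)^2 = \<mu>^(2*m) \<and>
       A * symp_J m * transpose_mat A = \<mu> \<cdot>\<^sub>m symp_J m \<and>
       (\<forall>a\<in>carrier_vec (2*m).
          let b = transpose_mat A *\<^sub>v a in
          \<mu> * (a \<bullet> (diag_lam m lam *\<^sub>v a)) + \<mu> * (vec_first a m \<bullet> vec_last a m)
          = b \<bullet> (diag_lam m lam' *\<^sub>v b) + vec_first b m \<bullet> vec_last b m
            + lam' $ (2*m) * (a \<bullet> k)^2) \<and>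
       lam $ (2*m) = \<mu> * lam' $ (2*m)"
proof -
  let ?n = "2*m+1"
  let ?z = "unit_vec ?n (2*m) :: 'a vec"
  let ?E = "\<lambda>i. unit_vec ?n i :: 'a vec"
  have bij: "bij_betw Psi (carrier_vec ?n) (carrier_vec ?n)"
    and add: "\<forall>x\<in>carrier_vec ?n. \<forall>y\<in>carrier_vec ?n. Psi (x + y) = Psi x + Psi y"
    and smul: "\<forall>c. \<forall>x\<in>carrier_vec ?n. Psi (c \<cdot>\<^sub>v x) = c \<cdot>\<^sub>v Psi x"
    and brk: "\<forall>x\<in>carrier_vec ?n. \<forall>y\<in>carrier_vec ?n. Psi (heis_bracket m x y) = heis_bracket m (Psi x) (Psi y)"
    and sqp: "\<forall>x\<in>carrier_vec ?n. Psi (heis_sq m lam x) = heis_sq m lam' (Psi x)"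
    using iso unfolding restricted_iso_def by auto
  have car: "\<forall>x\<in>carrier_vec ?n. Psi x \<in> carrier_vec ?n" using bij by (auto dest: bij_betwE)
  have inj: "inj_on Psi (carrier_vec ?n)" using bij by (simp add: bij_betw_def)
  have srj: "\<exists>x\<in>carrier_vec ?n. Psi x = y" if "y \<in> carrier_vec ?n" for y
    using bij that unfolding bij_betw_def by (metis imageE)
  have P0: "Psi (0\<^sub>v ?n) = 0\<^sub>v ?n"
  proof -
    have "Psi (0 \<cdot>\<^sub>v 0\<^sub>v ?n) = 0 \<cdot>\<^sub>v Psi (0\<^sub>v ?n)" using smul by auto
    moreover have "Psi (0\<^sub>v ?n) \<in> carrier_vec ?n" using car by auto
    moreover have "0 \<cdot>\<^sub>v (0\<^sub>v ?n :: 'a vec) = 0\<^sub>v ?n" by auto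
    moreover have "0 \<cdot>\<^sub>v Psi (0\<^sub>v ?n) = 0\<^sub>v ?n"
    proof -
      have pc: "Psi (0\<^sub>v ?n) \<in> carrier_vec ?n" using car by auto
      show ?thesis by (rule eq_vecI) (use pc in auto)
    qed
    ultimately show ?thesis by metis
  qed
  have lin: "Psi x = vec ?n (\<lambda>j. \<Sum>i<?n. x $ i * Psi (?E i) $ j)" if "x \<in> carrier_vec ?n" for x
    by (rule lin_repr[OF add smul car that])
  define w where "w = Psi ?z"
  have wc: "w \<in> carrier_vec ?n" unfolding w_def using car by simp
  have wb: "bil m w (?E j) = 0" if j: "j < 2*m" for j
  proof -
    obtain y where y: "y \<in> carrier_vec ?n" and Py: "Psi y = ?E j" using srj[of "?E j"] j by auto
    have "bil m ?z y = 0" unfolding bil_def by (intro sum.neutral) auto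
    then have "heis_bracket m ?z y = 0\<^sub>v ?n" unfolding heis_bracket_eq by auto
    then have "heis_bracket m w (?E j) = 0\<^sub>v ?n" using brk y P0 Py unfolding w_def by (metis unit_vec_carrier)
    then have "(heis_bracket m w (?E j)) $ (2*m) = 0" by simp
    then show ?thesis unfolding heis_bracket_eq by simp
  qed
  have w0: "w $ i = 0" if i: "i < 2*m" for i
  proof (cases "i < m")
    case True
    have "bil m w (?E (m+i)) = (\<Sum>l<m. (if l = i then w $ l else 0))"
      unfolding bil_def using True by (intro sum.cong) auto
    then show ?thesis using wb[of "m+i"] True by simp
  next
    case False
    have "bil m w (?E (i-m)) = (\<Sum>l<m. (if l = i - m then - w $ (m+l) else 0))"
      unfolding bil_def using False i by (intro sum.cong) auto
    moreover have "m + (i - m) = i" using False by simp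
    ultimately show ?thesis using wb[of "i-m"] False i by simp
  qed
  define \<mu> where "\<mu> = w $ (2*m)"
  have wz: "w = \<mu> \<cdot>\<^sub>v ?z" unfolding \<mu>_def
  proof (rule eq_vecI)
    fix i assume "i < dim_vec (w $ (2 * m) \<cdot>\<^sub>v ?z)"
    then have "i < 2*m \<or> i = 2*m" by auto
    then show "w $ i = (w $ (2 * m) \<cdot>\<^sub>v ?z) $ i" using w0 by auto
  qed (use wc in auto)
  have mu: "\<mu> \<noteq> 0"
  proof
    assume "\<mu> = 0"
    then have "Psi ?z = Psi (0\<^sub>v ?n)" using wz P0 unfolding w_def by auto
    then have "?z = 0\<^sub>v ?n" using inj by (auto dest: inj_onD)
    then have "?z $ (2*m) = (0\<^sub>v ?n :: 'a vec) $ (2*m)" by simp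
    then show False by simp
  qed
  have Psm: "Psi (c \<cdot>\<^sub>v ?z) = (c * \<mu>) \<cdot>\<^sub>v ?z" for c
    using smul wz unfolding w_def by auto
  define A where "A = mat (2*m) (2*m) (\<lambda>(i,j). Psi (?E i) $ j)"
  define k where "k = vec (2*m) (\<lambda>i. Psi (?E i) $ (2*m))"
  have A: "A \<in> carrier_mat (2*m) (2*m)" unfolding A_def by simp
  have k: "k \<in> carrier_vec (2*m)" unfolding k_def by simp
  have zc: "?z \<in> carrier_vec ?n" by simp
  have bilE: "bil m (Psi (?E i)) (Psi (?E j)) = \<mu> * bil m (?E i) (?E j)" if "i < ?n" "j < ?n" for i j
  proof -
    have "Psi (heis_bracket m (?E i) (?E j)) = heis_bracket m (Psi (?E i)) (Psi (?E j))"
      using brk that by auto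
    then have "(bil m (?E i) (?E j) * \<mu>) \<cdot>\<^sub>v ?z = bil m (Psi (?E i)) (Psi (?E j)) \<cdot>\<^sub>v ?z"
      unfolding heis_bracket_eq Psm .
    then have "((bil m (?E i) (?E j) * \<mu>) \<cdot>\<^sub>v ?z) $ (2*m) = (bil m (Psi (?E i)) (Psi (?E j)) \<cdot>\<^sub>v ?z) $ (2*m)" by simp
    then show ?thesis by (simp add: mult.commute)
  qed
  have rowA: "row A i = vec_first (Psi (?E i)) (2*m)" if "i < 2*m" for i
    using that by (intro eq_vecI) (auto simp: A_def vec_first_def)
  have AJ: "A * symp_J m * transpose_mat A = \<mu> \<cdot>\<^sub>m symp_J m"
  proof (rule eq_matI)
    fix i j assume "i < dim_row (\<mu> \<cdot>\<^sub>m symp_J m)" "j < dim_col (\<mu> \<cdot>\<^sub>m symp_J m)"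
    then have i: "i < 2*m" and j: "j < 2*m" by auto
    have Jc: "symp_J m \<in> carrier_mat (2*m) (2*m)" by simp
    have AT: "transpose_mat A \<in> carrier_mat (2*m) (2*m)" using A by simp
    have "(A * symp_J m * transpose_mat A) $$ (i,j) = (A * (symp_J m * transpose_mat A)) $$ (i,j)"
      using assoc_mult_mat[OF A Jc AT] by simp
    also have "\<dots> = row A i \<bullet> col (symp_J m * transpose_mat A) j"
      using i j A by simp
    also have "col (symp_J m * transpose_mat A) j = symp_J m *\<^sub>v row A j"
      using col_mult2[OF Jc AT j] A j by simp
    also have "row A i \<bullet> (symp_J m *\<^sub>v row A j) = bil m (row A i) (row A j)"
      using A i j by (intro symp_J_form) auto
    also have "\<dots> = bil m (Psi (?E i)) (Psi (?E j))"
      using i j by (simp only: rowA) (rule bil_first[symmetric])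
    also have "\<dots> = \<mu> * bil m (?E i) (?E j)" using i j by (intro bilE) auto
    also have "\<dots> = (\<mu> \<cdot>\<^sub>m symp_J m) $$ (i,j)" by (simp only: bil_unit[OF i j]) (simp add: symp_J_index i j)
    finally show "(A * symp_J m * transpose_mat A) $$ (i,j) = (\<mu> \<cdot>\<^sub>m symp_J m) $$ (i,j)" .
  qed (use A in auto)
  have detA: "(det A)^2 = \<mu>^(2*m)"
  proof -
    have Jc: "symp_J m \<in> carrier_mat (2*m) (2*m)" by simp
    have AT: "transpose_mat A \<in> carrier_mat (2*m) (2*m)" using A by simp
    have "det (A * symp_J m * transpose_mat A) = det A * det (symp_J m) * det A"
      using det_mult[OF mult_carrier_mat[OF A Jc] AT] det_mult[OF A Jc] det_transpose[OF A] by simp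
    then have d1: "det (A * symp_J m * transpose_mat A) = (det A)^2 * det (symp_J m)"
      by (simp add: power2_eq_square algebra_simps)
    have d2: "det (\<mu> \<cdot>\<^sub>m symp_J m) = \<mu>^(2*m) * det (symp_J m)" by simp
    have "(det A)^2 * det (symp_J m) = \<mu>^(2*m) * det (symp_J m)"
      using AJ d1 d2 by metis
    then show ?thesis using det_symp_J[of m, where 'a='a] by simp
  qed
  have dA: "det A \<noteq> 0"
  proof
    assume "det A = 0"
    then have "\<mu>^(2*m) = 0" using detA by simp
    then show False using mu by simp
  qed
  have invA: "invertible_mat A"
  proof -
    have "A \<in> Units (ring_mat TYPE('a) (2*m) ())" by (rule det_non_zero_imp_unit[OF A dA])
    then obtain B where B: "B \<in> carrier_mat (2*m) (2*m)" and "B * A = 1\<^sub>m (2*m)" "A * B = 1\<^sub>m (2*m)"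
      unfolding Units_def ring_mat_def by auto
    then show ?thesis unfolding invertible_mat_def inverts_mat_def square_mat.simps using A B by auto
  qed
  have Q: "\<forall>a\<in>carrier_vec (2*m).
          let b = transpose_mat A *\<^sub>v a in
          \<mu> * (a \<bullet> (diag_lam m lam *\<^sub>v a)) + \<mu> * (vec_first a m \<bullet> vec_last a m)
          = b \<bullet> (diag_lam m lam' *\<^sub>v b) + vec_first b m \<bullet> vec_last b m
            + lam' $ (2*m) * (a \<bullet> k)^2"
  proof
    fix a :: "'a vec" assume a: "a \<in> carrier_vec (2*m)"
    define xa where "xa = vec ?n (\<lambda>i. if i < 2*m then a $ i else 0)"
    have xc: "xa \<in> carrier_vec ?n" unfolding xa_def by simp
    have vxa: "vec_first xa (2*m) = a" using a by (intro eq_vecI) (auto simp: xa_def vec_first_def)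
    have Pxa: "Psi xa = vec ?n (\<lambda>j. \<Sum>i<2*m. a $ i * Psi (?E i) $ j)"
      unfolding lin[OF xc] by (intro eq_vecI) (auto simp: xa_def)
    have vP: "vec_first (Psi xa) (2*m) = transpose_mat A *\<^sub>v a"
      unfolding Pxa using a A
      by (intro eq_vecI) (auto simp: vec_first_def A_def scalar_prod_def atLeast0LessThan mult.commute intro!: sum.cong)
    have lP: "Psi xa $ (2*m) = a \<bullet> k"
      unfolding Pxa using a k by (auto simp: k_def scalar_prod_def atLeast0LessThan)
    have "Psi (heis_sq m lam xa) = heis_sq m lam' (Psi xa)" using sqp xc by auto
    then have "(sqf m lam xa * \<mu>) \<cdot>\<^sub>v ?z = sqf m lam' (Psi xa) \<cdot>\<^sub>v ?z"
      unfolding heis_sq_eq Psm .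
    then have "((sqf m lam xa * \<mu>) \<cdot>\<^sub>v ?z) $ (2*m) = (sqf m lam' (Psi xa) \<cdot>\<^sub>v ?z) $ (2*m)" by simp
    then have e: "sqf m lam xa * \<mu> = sqf m lam' (Psi xa)" by simp
    have x2: "xa $ (2*m) = 0" unfolding xa_def by simp
    show "let b = transpose_mat A *\<^sub>v a in
          \<mu> * (a \<bullet> (diag_lam m lam *\<^sub>v a)) + \<mu> * (vec_first a m \<bullet> vec_last a m)
          = b \<bullet> (diag_lam m lam' *\<^sub>v b) + vec_first b m \<bullet> vec_last b m
            + lam' $ (2*m) * (a \<bullet> k)^2"
      using e unfolding sqf_split[OF xc] sqf_split[OF car[rule_format, OF xc]] vxa vP lP x2 Let_def
      by (simp add: algebra_simps)
  qed
  have L: "lam $ (2*m) = \<mu> * lam' $ (2*m)"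
  proof -
    have "Psi (heis_sq m lam ?z) = heis_sq m lam' (Psi ?z)" using sqp zc by blast
    moreover have "Psi ?z = \<mu> \<cdot>\<^sub>v ?z" using wz unfolding w_def .
    moreover have "?z = 1 \<cdot>\<^sub>v ?z" by simp
    ultimately have "(sqf m lam (1 \<cdot>\<^sub>v ?z) * \<mu>) \<cdot>\<^sub>v ?z = sqf m lam' (\<mu> \<cdot>\<^sub>v ?z) \<cdot>\<^sub>v ?z"
      unfolding heis_sq_eq by (metis Psm)
    then have "((sqf m lam (1 \<cdot>\<^sub>v ?z) * \<mu>) \<cdot>\<^sub>v ?z) $ (2*m) = (sqf m lam' (\<mu> \<cdot>\<^sub>v ?z) \<cdot>\<^sub>v ?z) $ (2*m)" by simp
    then have "lam $ (2*m) * \<mu> = \<mu>^2 * lam' $ (2*m)" unfolding sqf_z by simp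
    then show ?thesis using mu by (simp add: power2_eq_square)
  qed
  show ?thesis using A invA k detA AJ Q L by blast
qed


theorem theorem3p2:
  fixes m :: nat and lam lam' :: "'a::field vec"
  assumes "CHAR('a) = 2"
    and "m \<ge> 1"
    and "lam \<in> carrier_vec (2*m+1)" and "lam' \<in> carrier_vec (2*m+1)"
  shows "restricted_isomorphic m lam lam' \<longleftrightarrow>
    (\<exists>A k \<mu>. A \<in> carrier_mat (2*m) (2*m) \<and> invertible_mat A \<and>
       k \<in> carrier_vec (2*m) \<and> (det A)^2 = \<mu>^(2*m) \<and>
       A * symp_J m * transpose_mat A = \<mu> \<cdot>\<^sub>m symp_J m \<and>
       (\<forall>a\<in>carrier_vec (2*m).
          let b = transpose_mat A *\<^sub>v a in
          \<mu> * (a \<bullet> (diag_lam m lam *\<^sub>v a)) + \<mu> * (vec_first a m \<bullet> vec_last a m)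
          = b \<bullet> (diag_lam m lam' *\<^sub>v b) + vec_first b m \<bullet> vec_last b m
            + lam' $ (2*m) * (a \<bullet> k)^2) \<and>
       lam $ (2*m) = \<mu> * lam' $ (2*m))"
  proof -
  have two: "(2::'a) = 0" using of_nat_CHAR[where 'a='a] assms(1) by simp
  show ?thesis
  proof
    assume "restricted_isomorphic m lam lam'"
    then obtain Psi where "restricted_iso m lam lam' Psi" unfolding restricted_isomorphic_def by blast
    then show "\<exists>A k \<mu>. A \<in> carrier_mat (2*m) (2*m) \<and> invertible_mat A \<and>
       k \<in> carrier_vec (2*m) \<and> (det A)^2 = \<mu>^(2*m) \<and>
       A * symp_J m * transpose_mat A = \<mu> \<cdot>\<^sub>m symp_J m \<and>
       (\<forall>a\<in>carrier_vec (2*m).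
          let b = transpose_mat A *\<^sub>v a in
          \<mu> * (a \<bullet> (diag_lam m lam *\<^sub>v a)) + \<mu> * (vec_first a m \<bullet> vec_last a m)
          = b \<bullet> (diag_lam m lam' *\<^sub>v b) + vec_first b m \<bullet> vec_last b m
            + lam' $ (2*m) * (a \<bullet> k)^2) \<and>
       lam $ (2*m) = \<mu> * lam' $ (2*m)"
      using forward_dir[OF assms(2)] by blast
  next
    assume "\<exists>A k \<mu>. A \<in> carrier_mat (2*m) (2*m) \<and> invertible_mat A \<and>
       k \<in> carrier_vec (2*m) \<and> (det A)^2 = \<mu>^(2*m) \<and>
       A * symp_J m * transpose_mat A = \<mu> \<cdot>\<^sub>m symp_J m \<and>
       (\<forall>a\<in>carrier_vec (2*m).
          let b = transpose_mat A *\<^sub>v a in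
          \<mu> * (a \<bullet> (diag_lam m lam *\<^sub>v a)) + \<mu> * (vec_first a m \<bullet> vec_last a m)
          = b \<bullet> (diag_lam m lam' *\<^sub>v b) + vec_first b m \<bullet> vec_last b m
            + lam' $ (2*m) * (a \<bullet> k)^2) \<and>
       lam $ (2*m) = \<mu> * lam' $ (2*m)"
    then obtain A k \<mu> where H: "A \<in> carrier_mat (2*m) (2*m)" "invertible_mat A"
       "k \<in> carrier_vec (2*m)" "(det A)^2 = \<mu>^(2*m)"
       "A * symp_J m * transpose_mat A = \<mu> \<cdot>\<^sub>m symp_J m"
       "\<forall>a\<in>carrier_vec (2*m).
          let b = transpose_mat A *\<^sub>v a in
          \<mu> * (a \<bullet> (diag_lam m lam *\<^sub>v a)) + \<mu> * (vec_first a m \<bullet> vec_last a m)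
          = b \<bullet> (diag_lam m lam' *\<^sub>v b) + vec_first b m \<bullet> vec_last b m
            + lam' $ (2*m) * (a \<bullet> k)^2"
       "lam $ (2*m) = \<mu> * lam' $ (2*m)" by blast
    show "restricted_isomorphic m lam lam'"
      by (rule converse_dir[OF two assms(2) H])
  qed
qed

end
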